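(* In the setting below, with $M$ of constant sectional curvature $K$, a nearly-hypo natural SU(2)-structure on $\mathcal S$ with $\tilde\theta=-2\theta$, $\omega_1=d\theta$, $\omega_2=b_0\alpha_0+b_1\alpha_1+b_2\alpha_2$, $\omega_3=\frac{Kb_1}{3}\alpha_0+\frac{s^2Kb_2-b_0}{6s^2}\alpha_1-\frac{b_1}{3s^2}\alpha_2$ (where $b_1^2-b_0b_2=1$, $(b_0+s^2Kb_2)^2+4s^2K=36s^4$, $K>-b_0^2/(s^2(1+b_1^2))$) is Sasaki–Einstein if and only if $K=9s^2$ (in particular $K>0$). Consequently, among those compatible with the canonical metric, all structures with $b_2=-b_0$, $b_1\ne0$, $b_0^2+b_1^2=1$, $K=3=s^{-2}$ are Sasaki–Einstein, and those with $b_2=-b_0=\pm1$, $b_1=0$, $s^2K+1=6s^2$ are Sasaki–Einstein if and only if $K=3$ and $s^2=1/3$.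
   Context: Let $(M,g)$ be a connected oriented Riemannian 3-manifold, $s>0$, and $\mathcal S=\{u\in TM:\|u\|=s\}$ the total space of the radius-$s$ tangent sphere bundle with the canonical (Sasaki-induced) metric. An adapted frame at $u\in\mathcal S$: take a positively oriented orthonormal frame $(f_0=u/s,f_1,f_2)$ of $T_{\pi(u)}M$ and set $e_0=f_0^h,e_1=f_1^h,e_2=f_2^h,e_3=f_1^v,e_4=f_2^v$ (horizontal and vertical lifts); dual coframe $e^0,\dots,e^4$, $e^{ij}=e^i\wedge e^j$. Globally defined forms: $\theta=s\,e^0$, $\alpha_0=e^{12}$, $\alpha_1=e^{14}-e^{23}$, $\alpha_2=e^{34}$, $d\theta=e^{31}+e^{42}$. For constant sectional curvature $K$: $d\alpha_0=s^{-2}\theta\wedge\alpha_1$, $d\alpha_1=2s^{-2}\theta\wedge\alpha_2-2K\theta\wedge\alpha_0$, $d\alpha_2=-K\theta\wedge\alpha_1$. An SU(2)-structure: $(\tilde\theta,\omega_1,\omega_2,\omega_3)$ with (C1) $\tilde\theta\wedge\omega_1\wedge\omega_1\neq0$, $\omega_i\wedge\omega_j=0$ ($i\ne j$), $\omega_1\wedge\omega_1=\omega_2\wedge\omega_2=\omega_3\wedge\omega_3=2v$, $v$ nowhere zero; (C2) $x\lrcorner\omega_1=y\lrcorner\omega_2\Rightarrow\omega_3(x,y)\ge0$. Nearly-hypo: $d\omega_2=3\tilde\theta\wedge\omega_3$, $d(\tilde\theta\wedge\omega_1)=-2\omega_1\wedge\omega_1$. Sasaki–Einstein SU(2)-structure: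 $d\tilde\theta=-2\omega_1$, $d\omega_2=3\tilde\theta\wedge\omega_3$, $d\omega_3=-3\tilde\theta\wedge\omega_2$. Compatible with the canonical metric: the metric $g_{SU(2)}$ on $\ker\tilde\theta$ defined by $x\lrcorner\omega_1\wedge y\lrcorner\omega_2\wedge\omega_3=g_{SU(2)}(x,y)\,v$ equals the canonical metric on $\ker\theta$. *)

theory Defs
  imports Complex_Main
begin

text \<open>Algebraic model of the exterior algebra at a point of the 5-dimensional
  sphere bundle, written in an adapted coframe e^0,...,e^4 (indices 0..4).
  A form is a function assigning to each increasing multi-index (a subset of
  {0..4}) its coefficient: the form is the sum over I of f I times e^I.\<close>

type_synonym form = "nat set \<Rightarrow> real"

definition fzero :: form where "fzero = (\<lambda>S. 0)"
definition fadd :: "form \<Rightarrow> form \<Rightarrow> form" where "fadd a b = (\<lambda>S. a S + b S)"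
definition fscale :: "real \<Rightarrow> form \<Rightarrow> form" where "fscale c a = (\<lambda>S. c * a S)"

definition ebas :: "nat \<Rightarrow> form" where "ebas i = (\<lambda>S. if S = {i} then 1 else 0)"

definition inv_count :: "nat set \<Rightarrow> nat set \<Rightarrow> nat" where
  "inv_count I J = card {(i, j). i \<in> I \<and> j \<in> J \<and> j < i}"

definition wedge :: "form \<Rightarrow> form \<Rightarrow> form" where
  "wedge a b = (\<lambda>S. if S \<subseteq> {..<5}
      then (\<Sum>I\<in>Pow S. (-1) ^ inv_count I (S - I) * a I * b (S - I)) else 0)"

definition e2 :: "nat \<Rightarrow> nat \<Rightarrow> form" where "e2 i j = wedge (ebas i) (ebas j)"

text \<open>Tangent vectors are given by their components x 0, ..., x 4 in the
  adapted frame e_0, ..., e_4.\<close>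
definition eval1 :: "form \<Rightarrow> (nat \<Rightarrow> real) \<Rightarrow> real" where
  "eval1 \<phi> x = (\<Sum>i<5. x i * \<phi> {i})"

definition comp2 :: "form \<Rightarrow> nat \<Rightarrow> nat \<Rightarrow> real" where
  "comp2 \<omega> i j = (if i < j then \<omega> {i, j} else if j < i then - \<omega> {i, j} else 0)"

definition eval2 :: "form \<Rightarrow> (nat \<Rightarrow> real) \<Rightarrow> (nat \<Rightarrow> real) \<Rightarrow> real" where
  "eval2 \<omega> x y = (\<Sum>i<5. \<Sum>j<5. x i * y j * comp2 \<omega> i j)"

definition contr :: "(nat \<Rightarrow> real) \<Rightarrow> form \<Rightarrow> form" where
  "contr x \<omega> = (\<lambda>S. if (\<exists>j<5. S = {j})
       then (\<Sum>i<5. x i * comp2 \<omega> i (the_elem S)) else 0)"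

definition theta :: "real \<Rightarrow> form" where "theta s = fscale s (ebas 0)"
definition alpha0 :: form where "alpha0 = e2 1 2"
definition alpha1 :: form where "alpha1 = fadd (e2 1 4) (fscale (-1) (e2 2 3))"
definition alpha2 :: form where "alpha2 = e2 3 4"
definition dtheta :: form where "dtheta = fadd (e2 3 1) (e2 4 2)"

definition alpha_comb :: "real \<Rightarrow> real \<Rightarrow> real \<Rightarrow> form" where
  "alpha_comb c0 c1 c2 = fadd (fscale c0 alpha0) (fadd (fscale c1 alpha1) (fscale c2 alpha2))"

text \<open>Natural forms with constant coefficients: linear combinations of the
  generators theta, d theta, alpha_0, alpha_1, alpha_2, theta \<and> d theta.
  Their exterior derivatives (constant sectional curvature K) are given by the
  structure equations: d theta, d(d theta) = 0, the formulas for d alpha_i,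
  and d(theta \<and> d theta) = d theta \<and> d theta.\<close>
definition gen :: "real \<Rightarrow> nat \<Rightarrow> form" where
  "gen s k = (if k = 0 then theta s else if k = 1 then dtheta
     else if k = 2 then alpha0 else if k = 3 then alpha1 else if k = 4 then alpha2
     else wedge (theta s) dtheta)"

definition dgen :: "real \<Rightarrow> real \<Rightarrow> nat \<Rightarrow> form" where
  "dgen K s k = (if k = 0 then dtheta else if k = 1 then fzero
     else if k = 2 then fscale (1 / s\<^sup>2) (wedge (theta s) alpha1)
     else if k = 3 then fadd (fscale (2 / s\<^sup>2) (wedge (theta s) alpha2))
                              (fscale (- 2 * K) (wedge (theta s) alpha0))
     else if k = 4 then fscale (- K) (wedge (theta s) alpha1)
     else wedge dtheta dtheta)"

definition lincomb :: "(nat \<Rightarrow> real) \<Rightarrow> (nat \<Rightarrow> form) \<Rightarrow> form" where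
  "lincomb c F = (\<lambda>S. \<Sum>k<6. c k * F k S)"

definition dnat :: "real \<Rightarrow> real \<Rightarrow> form \<Rightarrow> form" where
  "dnat K s \<omega> = (if (\<exists>c. \<omega> = lincomb c (gen s))
      then lincomb (SOME c. \<omega> = lincomb c (gen s)) (dgen K s) else fzero)"

definition su2_structure :: "form \<Rightarrow> form \<Rightarrow> form \<Rightarrow> form \<Rightarrow> bool" where
  "su2_structure \<theta>t \<omega>1 \<omega>2 \<omega>3 \<longleftrightarrow>
     wedge \<theta>t (wedge \<omega>1 \<omega>1) \<noteq> fzero \<and>
     wedge \<omega>1 \<omega>2 = fzero \<and> wedge \<omega>1 \<omega>3 = fzero \<and> wedge \<omega>2 \<omega>3 = fzero \<and>
     wedge \<omega>1 \<omega>1 = wedge \<omega>2 \<omega>2 \<and> wedge \<omega>2 \<omega>2 = wedge \<omega>3 \<omega>3 \<and>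
     wedge \<omega>1 \<omega>1 \<noteq> fzero \<and>
     (\<forall>x y. contr x \<omega>1 = contr y \<omega>2 \<longrightarrow> eval2 \<omega>3 x y \<ge> 0)"

definition nearly_hypo :: "real \<Rightarrow> real \<Rightarrow> form \<Rightarrow> form \<Rightarrow> form \<Rightarrow> form \<Rightarrow> bool" where
  "nearly_hypo K s \<theta>t \<omega>1 \<omega>2 \<omega>3 \<longleftrightarrow>
     dnat K s \<omega>2 = fscale 3 (wedge \<theta>t \<omega>3) \<and>
     dnat K s (wedge \<theta>t \<omega>1) = fscale (-2) (wedge \<omega>1 \<omega>1)"

definition sasaki_einstein :: "real \<Rightarrow> real \<Rightarrow> form \<Rightarrow> form \<Rightarrow> form \<Rightarrow> form \<Rightarrow> bool" where
  "sasaki_einstein K s \<theta>t \<omega>1 \<omega>2 \<omega>3 \<longleftrightarrow>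
     dnat K s \<theta>t = fscale (-2) \<omega>1 \<and>
     dnat K s \<omega>2 = fscale 3 (wedge \<theta>t \<omega>3) \<and>
     dnat K s \<omega>3 = fscale (-3) (wedge \<theta>t \<omega>2)"

text \<open>Compatibility with the canonical metric: the adapted frame e_0..e_4 is
  orthonormal for the canonical metric, so on ker theta it is the standard
  inner product of components; v is defined by \<omega>1 \<and> \<omega>1 = 2 v.\<close>
definition compatible :: "form \<Rightarrow> form \<Rightarrow> form \<Rightarrow> form \<Rightarrow> bool" where
  "compatible \<theta>t \<omega>1 \<omega>2 \<omega>3 \<longleftrightarrow>
     (\<forall>x y. eval1 \<theta>t x = 0 \<and> eval1 \<theta>t y = 0 \<longrightarrow>
        wedge (wedge (contr x \<omega>1) (contr y \<omega>2)) \<omega>3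
          = fscale (\<Sum>i<5. x i * y i) (fscale (1/2) (wedge \<omega>1 \<omega>1)))"

definition thetaT :: "real \<Rightarrow> form" where "thetaT s = fscale (-2) (theta s)"
definition omega2 :: "real \<Rightarrow> real \<Rightarrow> real \<Rightarrow> form" where
  "omega2 b0 b1 b2 = alpha_comb b0 b1 b2"
definition omega3 :: "real \<Rightarrow> real \<Rightarrow> real \<Rightarrow> real \<Rightarrow> real \<Rightarrow> form" where
  "omega3 K s b0 b1 b2 = alpha_comb (K * b1 / 3) ((s\<^sup>2 * K * b2 - b0) / (6 * s\<^sup>2)) (- b1 / (3 * s\<^sup>2))"

definition family_hyps :: "real \<Rightarrow> real \<Rightarrow> real \<Rightarrow> real \<Rightarrow> real \<Rightarrow> bool" where
  "family_hyps K s b0 b1 b2 \<longleftrightarrow>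
     b1\<^sup>2 - b0 * b2 = 1 \<and> (b0 + s\<^sup>2 * K * b2)\<^sup>2 + 4 * s\<^sup>2 * K = 36 * s ^ 4 \<and>
     K > - b0\<^sup>2 / (s\<^sup>2 * (1 + b1\<^sup>2)) \<and>
     su2_structure (thetaT s) dtheta (omega2 b0 b1 b2) (omega3 K s b0 b1 b2) \<and>
     nearly_hypo K s (thetaT s) dtheta (omega2 b0 b1 b2) (omega3 K s b0 b1 b2)"

end

theory Submission
  imports Defs
begin

lemma inv_count_0: "inv_count {0} X = 0"
proof -
  have "{(a, b). a \<in> {0::nat} \<and> b \<in> X \<and> b < a} = {}" by auto
  then show ?thesis unfolding inv_count_def by (simp only: card.empty)
qed

lemma inv_count_ij: "inv_count {i} {j} = (if j < i then 1 else 0)"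
proof -
  have "{(a, b). a \<in> {i} \<and> b \<in> {j} \<and> b < a} = (if j < i then {(i,j)} else {})" by auto
  then show ?thesis unfolding inv_count_def by (simp only: card.empty card.insert) simp
qed

lemma wedge_theta: "wedge (theta s) b S = (if S \<subseteq> {..<5} \<and> 0 \<in> S then s * b (S - {0}) else 0)"
proof (cases "S \<subseteq> {..<5}")
  case True
  then have fin: "finite (Pow S)" using finite_subset by blast
  have "(\<Sum>I\<in>Pow S. (-1) ^ inv_count I (S - I) * theta s I * b (S - I))
     = (\<Sum>I\<in>Pow S. if I = {0} then s * b (S - {0}) else 0)"
    by (rule sum.cong) (auto simp: theta_def fscale_def ebas_def inv_count_0)
  also have "\<dots> = (if 0 \<in> S then s * b (S - {0}) else 0)"
    using fin by (simp add: sum.delta)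
  finally show ?thesis using True unfolding wedge_def by simp
qed (simp add: wedge_def)

lemma e2_val: "e2 i j T = (if T = {i,j} \<and> i<5 \<and> j<5 \<and> i\<noteq>j then (if j<i then -1 else 1) else 0)"
proof (cases "T \<subseteq> {..<5}")
  case True
  then have fin: "finite (Pow T)" using finite_subset by blast
  have "(\<Sum>I\<in>Pow T. (-1) ^ inv_count I (T - I) * ebas i I * ebas j (T - I))
     = (\<Sum>I\<in>Pow T. if I = {i} then (-1) ^ inv_count {i} (T - {i}) * ebas j (T - {i}) else 0)"
    by (rule sum.cong) (auto simp: ebas_def)
  also have "\<dots> = (if i \<in> T then (-1) ^ inv_count {i} (T - {i}) * ebas j (T - {i}) else 0)"
    using fin by (simp add: sum.delta)
  also have "\<dots> = (if T = {i,j} \<and> i<5 \<and> j<5 \<and> i\<noteq>j then (if j<i then -1 else 1) else 0)"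
  proof (cases "i \<in> T \<and> T - {i} = {j}")
    case c: True
    then have "T = {i,j}" "i \<noteq> j" by auto
    then show ?thesis using c True by (auto simp: ebas_def inv_count_ij)
  next
    case False
    then show ?thesis by (auto simp: ebas_def)
  qed
  finally show ?thesis using True unfolding wedge_def e2_def by simp
qed (auto simp: wedge_def e2_def)


lemma theta_val: "theta s S = (if S = {0} then s else 0)"
  by (simp add: theta_def fscale_def ebas_def)

lemma three_ne_two: "a \<noteq> b \<Longrightarrow> a \<noteq> c \<Longrightarrow> b \<noteq> c \<Longrightarrow> {a,b,c} \<noteq> {d,e}"
proof
  assume "a \<noteq> b" "a \<noteq> c" "b \<noteq> c" "{a,b,c} = {d,e}"
  then have "card {a,b,c} = card {d,e}" by simp
  moreover have "card {a,b,c} = 3" using \<open>a \<noteq> b\<close> \<open>a \<noteq> c\<close> \<open>b \<noteq> c\<close> by simp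
  moreover have "card {d,e} \<le> 2" by (simp add: card_insert_le_m1)
  ultimately show False by simp
qed

lemmas vals = three_ne_two gen_def theta_val fscale_def ebas_def e2_val alpha0_def alpha1_def alpha2_def
  fadd_def dtheta_def wedge_theta doubleton_eq_iff fzero_def

lemma lincomb6: "lincomb c F S = c 0 * F 0 S + c 1 * F 1 S + c 2 * F 2 S + c 3 * F 3 S + c 4 * F 4 S + c 5 * F 5 S"
  unfolding lincomb_def by (simp add: eval_nat_numeral)

lemma indep:
  assumes "s \<noteq> 0" "lincomb a (gen s) = lincomb b (gen s)"
  shows "\<forall>k<6. a k = b k"
proof -
  have e: "\<And>S. lincomb a (gen s) S = lincomb b (gen s) S" using assms(2) by simp
  have v0: "a 0 = b 0" using e[of "{0}"] assms(1) by (simp add: lincomb6 vals)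
  have v1: "a 1 = b 1" using e[of "{1,3}"] assms(1) by (simp add: lincomb6 vals)
  have v2: "a 2 = b 2" using e[of "{1,2}"] assms(1) by (simp add: lincomb6 vals)
  have v3: "a 3 = b 3" using e[of "{1,4}"] assms(1) by (simp add: lincomb6 vals)
  have v4: "a 4 = b 4" using e[of "{3,4}"] assms(1) by (simp add: lincomb6 vals)
  have v5: "a 5 = b 5" using e[of "{0,1,3}"] assms(1) by (simp add: lincomb6 vals insert_Diff_if)
  show ?thesis using v0 v1 v2 v3 v4 v5 by (auto simp: less_Suc_eq eval_nat_numeral)
qed

lemma dnat_lin: assumes "s \<noteq> 0" shows "dnat K s (lincomb c (gen s)) = lincomb c (dgen K s)"
proof -
  let ?c = "SOME c'. lincomb c (gen s) = lincomb c' (gen s)"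
  have "lincomb c (gen s) = lincomb ?c (gen s)" by (rule someI[of _ c]) simp
  then have "\<forall>k<6. c k = ?c k" using indep assms by blast
  then have "lincomb ?c (dgen K s) = lincomb c (dgen K s)" unfolding lincomb_def by auto
  then show ?thesis unfolding dnat_def by auto
qed


lemma wedge_scale_l: "wedge (fscale c x) y = fscale c (wedge x y)"
  unfolding wedge_def fscale_def by (auto simp: sum_distrib_left algebra_simps)
lemma wedge_scale_r: "wedge x (fscale c y) = fscale c (wedge x y)"
  unfolding wedge_def fscale_def by (auto simp: sum_distrib_left algebra_simps)
lemma wedge_add_r: "wedge x (fadd y z) = fadd (wedge x y) (wedge x z)"
  unfolding wedge_def fadd_def by (auto simp: sum.distrib algebra_simps)

lemma thetaT_lin: "thetaT s = lincomb (\<lambda>k. if k = 0 then -2 else 0) (gen s)"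
  by (rule ext) (simp add: lincomb6 thetaT_def gen_def fscale_def)

lemma comb_lin: "alpha_comb c0 c1 c2 = lincomb (\<lambda>k. if k = 2 then c0 else if k = 3 then c1 else if k = 4 then c2 else 0) (gen s)"
  by (rule ext) (simp add: lincomb6 alpha_comb_def gen_def fscale_def fadd_def)

abbreviation W where "W s a \<equiv> wedge (theta s) a"

lemma d_comb: "s \<noteq> 0 \<Longrightarrow> dnat K s (alpha_comb c0 c1 c2) =
   (\<lambda>S. c0 * (1/s\<^sup>2) * W s alpha1 S + c1 * (2/s\<^sup>2) * W s alpha2 S - 2 * K * c1 * W s alpha0 S - K * c2 * W s alpha1 S)"
  apply (subst comb_lin[of _ _ _ s])
  apply (subst dnat_lin, assumption)
  by (rule ext) (simp add: lincomb6 dgen_def fscale_def fadd_def algebra_simps)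

lemma T_comb: "fscale c (wedge (thetaT s) (alpha_comb c0 c1 c2)) =
   (\<lambda>S. -2 * c * (c0 * W s alpha0 S + c1 * W s alpha1 S + c2 * W s alpha2 S))"
  unfolding thetaT_def alpha_comb_def
  by (rule ext) (simp only: wedge_scale_l wedge_scale_r wedge_add_r, simp add: fscale_def fadd_def algebra_simps)

lemma L1: "s \<noteq> 0 \<Longrightarrow> dnat K s (thetaT s) = fscale (-2) dtheta"
  apply (subst thetaT_lin, subst dnat_lin, assumption)
  by (rule ext) (simp add: lincomb6 dgen_def fscale_def)

lemma W_vals: "W s alpha0 {0,1,2} = s" "W s alpha1 {0,1,2} = 0" "W s alpha2 {0,1,2} = 0"
  "W s alpha0 {0,1,4} = 0" "W s alpha1 {0,1,4} = s" "W s alpha2 {0,1,4} = 0"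
  "W s alpha0 {0,3,4} = 0" "W s alpha1 {0,3,4} = 0" "W s alpha2 {0,3,4} = s"
  by (simp_all add: wedge_theta vals insert_Diff_if)

lemma L2: "s \<noteq> 0 \<Longrightarrow> dnat K s (omega2 b0 b1 b2) = fscale 3 (wedge (thetaT s) (omega3 K s b0 b1 b2))"
  unfolding omega2_def omega3_def
  apply (subst d_comb, assumption, subst T_comb)
  by (rule ext) (simp add: field_simps power2_eq_square)

lemma L3: assumes s: "s \<noteq> 0"
  shows "dnat K s (omega3 K s b0 b1 b2) = fscale (-3) (wedge (thetaT s) (omega2 b0 b1 b2)) \<longleftrightarrow>
    (- 2 * K * ((s\<^sup>2 * K * b2 - b0) / (6 * s\<^sup>2)) = 6 * b0 \<and>
     (K * b1 / 3) / s\<^sup>2 - K * (- b1 / (3 * s\<^sup>2)) = 6 * b1 \<and>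
     2 * ((s\<^sup>2 * K * b2 - b0) / (6 * s\<^sup>2)) / s\<^sup>2 = 6 * b2)"
  (is "?L = ?R \<longleftrightarrow> ?E")
proof -
  have eq: "?L = (\<lambda>S. (K * b1 / 3) * (1/s\<^sup>2) * W s alpha1 S + ((s\<^sup>2 * K * b2 - b0) / (6 * s\<^sup>2)) * (2/s\<^sup>2) * W s alpha2 S
       - 2 * K * ((s\<^sup>2 * K * b2 - b0) / (6 * s\<^sup>2)) * W s alpha0 S - K * (- b1 / (3 * s\<^sup>2)) * W s alpha1 S)"
    unfolding omega3_def using d_comb[OF s] by blast
  have eq2: "?R = (\<lambda>S. -2 * (-3) * (b0 * W s alpha0 S + b1 * W s alpha1 S + b2 * W s alpha2 S))"
    unfolding omega2_def by (rule T_comb)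
  show ?thesis
  proof
    assume h: "?L = ?R"
    have a: "?L {0,1,2} = ?R {0,1,2}" "?L {0,1,4} = ?R {0,1,4}" "?L {0,3,4} = ?R {0,3,4}" using h by simp_all
    have a1: "- 2 * K * ((s\<^sup>2 * K * b2 - b0) / (6 * s\<^sup>2)) * s = 6 * b0 * s"
      using a(1) unfolding eq eq2 W_vals by simp
    have a2: "((K * b1 / 3) / s\<^sup>2 - K * (- b1 / (3 * s\<^sup>2))) * s = 6 * b1 * s"
      using a(2) unfolding eq eq2 W_vals by (simp add: algebra_simps)
    have a3': "((s\<^sup>2 * K * b2 - b0) / (6 * s\<^sup>2)) * (2/s\<^sup>2) * s = 6 * b2 * s"
      using a(3) unfolding eq eq2 W_vals by simp
    have a3: "(2 * ((s\<^sup>2 * K * b2 - b0) / (6 * s\<^sup>2)) / s\<^sup>2) * s = 6 * b2 * s"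
      using a3' by (metis times_divide_eq_right mult.commute)
    have "- 2 * K * ((s\<^sup>2 * K * b2 - b0) / (6 * s\<^sup>2)) = 6 * b0" using a1 s mult_cancel_right by blast
    moreover have "(K * b1 / 3) / s\<^sup>2 - K * (- b1 / (3 * s\<^sup>2)) = 6 * b1" using a2 s mult_cancel_right by blast
    moreover have "2 * ((s\<^sup>2 * K * b2 - b0) / (6 * s\<^sup>2)) / s\<^sup>2 = 6 * b2" using a3 s mult_cancel_right by blast
    ultimately show ?E by blast
  next
    assume E: ?E
    show "?L = ?R" unfolding eq eq2
    proof (rule ext)
      fix S
      define c0 where "c0 = K * b1 / 3"
      define c1 where "c1 = (s\<^sup>2 * K * b2 - b0) / (6 * s\<^sup>2)"
      define c2 where "c2 = - b1 / (3 * s\<^sup>2)"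
      have E': "- 2 * K * c1 = 6 * b0" "c0 / s\<^sup>2 - K * c2 = 6 * b1" "2 * c1 / s\<^sup>2 = 6 * b2"
        using E unfolding c0_def c1_def c2_def by auto
      have "c0 * (1/s\<^sup>2) * W s alpha1 S + c1 * (2/s\<^sup>2) * W s alpha2 S - 2 * K * c1 * W s alpha0 S - K * c2 * W s alpha1 S
         = (- 2 * K * c1) * W s alpha0 S + (c0 / s\<^sup>2 - K * c2) * W s alpha1 S + (2 * c1 / s\<^sup>2) * W s alpha2 S"
        by (simp add: algebra_simps)
      also have "\<dots> = -2 * (-3) * (b0 * W s alpha0 S + b1 * W s alpha1 S + b2 * W s alpha2 S)"
        unfolding E' by (simp add: algebra_simps)
      finally show "c0 * (1/s\<^sup>2) * W s alpha1 S + c1 * (2/s\<^sup>2) * W s alpha2 S - 2 * K * c1 * W s alpha0 S - K * c2 * W s alpha1 S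
         = -2 * (-3) * (b0 * W s alpha0 S + b1 * W s alpha1 S + b2 * W s alpha2 S)"
        unfolding c0_def c1_def c2_def .
    qed
  qed
qed


lemma Eiff: fixes s K b0 b1 b2 :: real assumes s: "s > 0"
  shows "(- 2 * K * ((s\<^sup>2 * K * b2 - b0) / (6 * s\<^sup>2)) = 6 * b0 \<and>
     (K * b1 / 3) / s\<^sup>2 - K * (- b1 / (3 * s\<^sup>2)) = 6 * b1 \<and>
     2 * ((s\<^sup>2 * K * b2 - b0) / (6 * s\<^sup>2)) / s\<^sup>2 = 6 * b2)
   \<longleftrightarrow> (- K * (s\<^sup>2 * K * b2 - b0) = 18 * s\<^sup>2 * b0 \<and> b1 * (K - 9 * s\<^sup>2) = 0 \<and>
        s\<^sup>2 * K * b2 - b0 = 18 * s^4 * b2)"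
proof -
  have s2: "s\<^sup>2 \<noteq> 0" using s by simp
  have 1: "- 2 * K * ((s\<^sup>2 * K * b2 - b0) / (6 * s\<^sup>2)) = 6 * b0 \<longleftrightarrow> - K * (s\<^sup>2 * K * b2 - b0) = 18 * s\<^sup>2 * b0"
    using s2 by (simp add: field_simps; (auto simp: algebra_simps)?)
  have 2: "(K * b1 / 3) / s\<^sup>2 - K * (- b1 / (3 * s\<^sup>2)) = 6 * b1 \<longleftrightarrow> b1 * (K - 9 * s\<^sup>2) = 0"
    using s2 by (simp add: field_simps; (auto simp: algebra_simps)?)
  have 3: "2 * ((s\<^sup>2 * K * b2 - b0) / (6 * s\<^sup>2)) / s\<^sup>2 = 6 * b2 \<longleftrightarrow> s\<^sup>2 * K * b2 - b0 = 18 * s^4 * b2"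
    using s2 by (simp add: field_simps power2_eq_square power4_eq_xxxx; (auto simp: algebra_simps)?)
  show ?thesis using 1 2 3 by blast
qed

lemma alg1: fixes s K b0 b1 b2 :: real assumes s: "s > 0" and h1: "b1\<^sup>2 - b0 * b2 = 1" and h2: "(b0 + s\<^sup>2 * K * b2)\<^sup>2 + 4 * s\<^sup>2 * K = 36 * s ^ 4"
  shows "(- K * (s\<^sup>2 * K * b2 - b0) = 18 * s\<^sup>2 * b0 \<and> b1 * (K - 9 * s\<^sup>2) = 0 \<and>
        s\<^sup>2 * K * b2 - b0 = 18 * s^4 * b2) \<longleftrightarrow> K = 9 * s\<^sup>2"
proof
  assume K: "K = 9 * s\<^sup>2"
  have "(b0 + 9 * s^4 * b2)\<^sup>2 = 0" using h2 unfolding K by (simp add: algebra_simps power2_eq_square power4_eq_xxxx)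
  then have b0: "b0 = - 9 * s^4 * b2" by simp
  show "- K * (s\<^sup>2 * K * b2 - b0) = 18 * s\<^sup>2 * b0 \<and> b1 * (K - 9 * s\<^sup>2) = 0 \<and>
        s\<^sup>2 * K * b2 - b0 = 18 * s^4 * b2"
    unfolding K b0 by (simp add: algebra_simps power2_eq_square power4_eq_xxxx)
next
  assume P: "- K * (s\<^sup>2 * K * b2 - b0) = 18 * s\<^sup>2 * b0 \<and> b1 * (K - 9 * s\<^sup>2) = 0 \<and>
        s\<^sup>2 * K * b2 - b0 = 18 * s^4 * b2"
  show "K = 9 * s\<^sup>2"
  proof (cases "b1 = 0")
    case False then show ?thesis using P by simp
  next
    case True
    then have "b0 * b2 = -1" using h1 by simp
    then have b2: "b2 \<noteq> 0" by auto
    have e3: "s\<^sup>2 * K * b2 - b0 = 18 * s^4 * b2" using P by blast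
    have "- K * (18 * s^4 * b2) = 18 * s\<^sup>2 * b0" using P e3 by simp
    then have "s\<^sup>2 * (- K * s\<^sup>2 * b2) = s\<^sup>2 * b0" by (simp add: algebra_simps power2_eq_square power4_eq_xxxx)
    moreover have "s\<^sup>2 \<noteq> 0" using s by simp
    ultimately have b0: "b0 = - K * s\<^sup>2 * b2" using mult_left_cancel by metis
    have "(s\<^sup>2 * b2) * (2 * K - 18 * s\<^sup>2) = 0" using e3 unfolding b0 by (simp add: algebra_simps power2_eq_square power4_eq_xxxx)
    then show ?thesis using s b2 by simp
  qed
qed


lemma SE_iff: fixes s K b0 b1 b2 :: real assumes s: "s > 0" and fh: "family_hyps K s b0 b1 b2"
  shows "sasaki_einstein K s (thetaT s) dtheta (omega2 b0 b1 b2) (omega3 K s b0 b1 b2) \<longleftrightarrow> K = 9 * s\<^sup>2"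
proof -
  have s0: "s \<noteq> 0" using s by simp
  have h1: "b1\<^sup>2 - b0 * b2 = 1" and h2: "(b0 + s\<^sup>2 * K * b2)\<^sup>2 + 4 * s\<^sup>2 * K = 36 * s ^ 4"
    using fh unfolding family_hyps_def by auto
  show ?thesis unfolding sasaki_einstein_def L1[OF s0] L2[OF s0] L3[OF s0] Eiff[OF s] alg1[OF s h1 h2]
    by simp
qed

theorem mainTheorem9:
  fixes s K b0 b1 b2 :: real
  assumes "s > 0"
  shows "(family_hyps K s b0 b1 b2 \<longrightarrow>
           ((sasaki_einstein K s (thetaT s) dtheta (omega2 b0 b1 b2) (omega3 K s b0 b1 b2)
              \<longleftrightarrow> K = 9 * s\<^sup>2) \<and>
            (sasaki_einstein K s (thetaT s) dtheta (omega2 b0 b1 b2) (omega3 K s b0 b1 b2)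
              \<longrightarrow> K > 0)))
       \<and> (family_hyps K s b0 b1 b2 \<and>
          compatible (thetaT s) dtheta (omega2 b0 b1 b2) (omega3 K s b0 b1 b2) \<and>
          b2 = - b0 \<and> b1 \<noteq> 0 \<and> b0\<^sup>2 + b1\<^sup>2 = 1 \<and> K = 3 \<and> 1 / s\<^sup>2 = 3
          \<longrightarrow> sasaki_einstein K s (thetaT s) dtheta (omega2 b0 b1 b2) (omega3 K s b0 b1 b2))
       \<and> (family_hyps K s b0 b1 b2 \<and>
          compatible (thetaT s) dtheta (omega2 b0 b1 b2) (omega3 K s b0 b1 b2) \<and>
          b2 = - b0 \<and> (b0 = 1 \<or> b0 = -1) \<and> b1 = 0 \<and> s\<^sup>2 * K + 1 = 6 * s\<^sup>2
          \<longrightarrow> (sasaki_einstein K s (thetaT s) dtheta (omega2 b0 b1 b2) (omega3 K s b0 b1 b2)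
               \<longleftrightarrow> K = 3 \<and> s\<^sup>2 = 1 / 3))"
proof (intro conjI impI)
  assume fh: "family_hyps K s b0 b1 b2"
  show "sasaki_einstein K s (thetaT s) dtheta (omega2 b0 b1 b2) (omega3 K s b0 b1 b2) \<longleftrightarrow> K = 9 * s\<^sup>2"
    using SE_iff[OF assms fh] .
  show "sasaki_einstein K s (thetaT s) dtheta (omega2 b0 b1 b2) (omega3 K s b0 b1 b2) \<Longrightarrow> K > 0"
    using SE_iff[OF assms fh] assms by simp
next
  assume h: "family_hyps K s b0 b1 b2 \<and>
          compatible (thetaT s) dtheta (omega2 b0 b1 b2) (omega3 K s b0 b1 b2) \<and>
          b2 = - b0 \<and> b1 \<noteq> 0 \<and> b0\<^sup>2 + b1\<^sup>2 = 1 \<and> K = 3 \<and> 1 / s\<^sup>2 = 3"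
  then have i: "1 / s\<^sup>2 = 3" by blast
  have "s\<^sup>2 \<noteq> 0" using assms by simp
  then have "s\<^sup>2 = 1/3" using i by (simp add: field_simps)
  then have "K = 9 * s\<^sup>2" using h by simp
  then show "sasaki_einstein K s (thetaT s) dtheta (omega2 b0 b1 b2) (omega3 K s b0 b1 b2)"
    using SE_iff[OF assms] h by blast
next
  assume h: "family_hyps K s b0 b1 b2 \<and>
          compatible (thetaT s) dtheta (omega2 b0 b1 b2) (omega3 K s b0 b1 b2) \<and>
          b2 = - b0 \<and> (b0 = 1 \<or> b0 = -1) \<and> b1 = 0 \<and> s\<^sup>2 * K + 1 = 6 * s\<^sup>2"
  have "K = 9 * s\<^sup>2 \<longleftrightarrow> K = 3 \<and> s\<^sup>2 = 1 / 3"
  proof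
    assume K: "K = 9 * s\<^sup>2"
    then have "(3 * s\<^sup>2 - 1)\<^sup>2 = 0" using h by (simp add: algebra_simps power2_eq_square)
    then have "s\<^sup>2 = 1/3" by simp
    then show "K = 3 \<and> s\<^sup>2 = 1 / 3" using K by simp
  qed simp
  then show "sasaki_einstein K s (thetaT s) dtheta (omega2 b0 b1 b2) (omega3 K s b0 b1 b2) \<longleftrightarrow> K = 3 \<and> s\<^sup>2 = 1 / 3"
    using SE_iff[OF assms] h by blast
qed

end
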